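(* Consider a stationary memoryless discrete source over a finite alphabet $A$ with $|A|\geq 2$ and symbol distribution $P$. Assume every symbol probability is positive and less than $1$. Let $\rho$ be the reciprocal of the smallest symbol probability, so that $\rho>1$. Let $T$ be a Tunstall parse tree with $n$ leaves, and suppose $$\log_2 n-c(\rho)>0,\qquad\text{where } c(\rho)=\left(\frac{\rho\ln\rho}{\rho-1}-1-\ln\frac{\rho\ln\rho}{\rho-1}\right)\frac{1}{\ln 2}.$$ Then the compression rate $R=\lceil\log_2 n\rceil/E[L]$ of the corresponding variable-to-fixed length code, in which each leaf is encoded by a binary codeword of length $\lceil\log_2 n\rceil$, satisfies $$R\leq\frac{\lceil\log_2 n\rceil\,H(P)}{\log_2 n-c(\rho)}.$$
   Context: A parse tree is a complete $|A|$-ary tree whose edges are labeled by source symbols. Each leaf corresponds to a source segment, namely the string of labels on its root-to-leaf path. The probability of a leaf is the product of the probabilities of its labels. A Tunstall parse tree is obtained by starting from the tree whose root has one child per symbol of $A$, and then repeatedly replacing a leaf of maximum probability by an internal node with $|A|$ children. Here $n$ is the number of leaves obtained after some number of such expansions. $L$ is the length (depth) of the random source segment parsed, i.e., of the leaf reached by the source. $H(P)$ is the source entropy in bits. *)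

theory Defs
  imports Complex_Main
begin

text \<open>Source segments are lists of symbols (root-to-leaf label strings).
  A complete parse tree is represented by its set of leaves.\<close>

definition seg_prob :: "('a \<Rightarrow> real) \<Rightarrow> 'a list \<Rightarrow> real" where
  "seg_prob P w = (\<Prod>i<length w. P (w ! i))"

inductive tunstall_tree :: "('a \<Rightarrow> real) \<Rightarrow> 'a list set \<Rightarrow> bool" for P where
  init: "tunstall_tree P {[a] | a. True}"
| expand: "tunstall_tree P S \<Longrightarrow> w \<in> S \<Longrightarrow> (\<forall>v\<in>S. seg_prob P v \<le> seg_prob P w)
     \<Longrightarrow> tunstall_tree P ((S - {w}) \<union> {w @ [a] | a. True})"

definition expected_length :: "('a \<Rightarrow> real) \<Rightarrow> 'a list set \<Rightarrow> real" where
  "expected_length P S = (\<Sum>w\<in>S. seg_prob P w * real (length w))"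

definition entropy2 :: "('a::finite \<Rightarrow> real) \<Rightarrow> real" where
  "entropy2 P = - (\<Sum>a\<in>UNIV. P a * log 2 (P a))"

definition c_rho :: "real \<Rightarrow> real" where
  "c_rho \<rho> = (\<rho> * ln \<rho> / (\<rho> - 1) - 1 - ln (\<rho> * ln \<rho> / (\<rho> - 1))) * (1 / ln 2)"

definition tunstall_rate :: "('a \<Rightarrow> real) \<Rightarrow> 'a list set \<Rightarrow> real" where
  "tunstall_rate P S = real_of_int \<lceil>log 2 (real (card S))\<rceil> / expected_length P S"

end

theory Submission
  imports Defs "HOL-Analysis.Convex"
begin

lemma seg_prob_snoc: "seg_prob P (w @ [a]) = seg_prob P w * P a"
  unfolding seg_prob_def by (simp add: prod.lessThan_Suc nth_append)

lemma seg_prob_pos: "(\<And>a. 0 < P a) \<Longrightarrow> 0 < seg_prob P w"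
  unfolding seg_prob_def by (intro prod_pos) auto

lemma inv1:
  fixes P :: "'a::finite \<Rightarrow> real"
  assumes "tunstall_tree P S"
  shows "finite S \<and> (\<forall>u\<in>S. \<forall>z. u @ z \<in> S \<longrightarrow> z = []) \<and> (\<forall>u\<in>S. u \<noteq> [])"
  using assms
proof induction
  case init
  have "{[a] | a. True} = range (\<lambda>a::'a. [a])" by auto
  then show ?case by (auto simp: Cons_eq_append_conv)
next
  case (expand S w)
  have e: "{w @ [a] | a. True} = range (\<lambda>a. w @ [a])" by auto
  from expand have fin: "finite S" and pf: "\<forall>u\<in>S. \<forall>z. u @ z \<in> S \<longrightarrow> z = []"
    and ne: "\<forall>u\<in>S. u \<noteq> []" by auto
  have A: "z = []" if u: "u \<in> (S - {w}) \<union> {w @ [a] | a. True}"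
      and v: "u @ z \<in> (S - {w}) \<union> {w @ [a] | a. True}" for u z
  proof -
    consider "u \<in> S - {w}" "u @ z \<in> S - {w}" | a where "u \<in> S - {w}" "u @ z = w @ [a]"
      | a where "u = w @ [a]" "u @ z \<in> S - {w}" | a b where "u = w @ [a]" "u @ z = w @ [b]"
      using u v by blast
    then show ?thesis
    proof cases
      case 1 then show ?thesis using pf by auto
    next
      case (2 a)
      then have "u @ z = w @ [a]" by simp
      then obtain z' where "w = u @ z' \<or> u = w @ z'" by (metis append_eq_append_conv2)
      then show ?thesis
      proof
        assume "w = u @ z'" then have "z' = []" using pf 2 \<open>w \<in> S\<close> by auto
        then show ?thesis using 2 \<open>w = u @ z'\<close> by auto
      next
        assume h: "u = w @ z'"
        then have "z' = []" using pf 2 \<open>w \<in> S\<close> by auto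
        then show ?thesis using 2 h by auto
      qed
    next
      case (3 a)
      then have "w @ ([a] @ z) \<in> S" by simp
      then show ?thesis using pf \<open>w \<in> S\<close> by blast
    next
      case (4 a b) then show ?thesis by simp
    qed
  qed
  have "finite {w @ [a] | a. True}" unfolding e by simp
  then show ?case using fin ne A by blast
qed

lemma sum_expand:
  fixes S :: "'a::finite list set" and f :: "'a list \<Rightarrow> real"
  assumes "finite S" "w \<in> S" "\<forall>a. w @ [a] \<notin> S"
  shows "sum f ((S - {w}) \<union> {w @ [a] | a. True}) = sum f S - f w + (\<Sum>a\<in>UNIV. f (w @ [a]))"
    and "card ((S - {w}) \<union> {w @ [a] | a. True}) = card S - 1 + card (UNIV :: 'a set)"
proof -
  have e: "{w @ [a] | a. True} = range (\<lambda>a. w @ [a])" by auto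
  have inj: "inj (\<lambda>a. w @ [a])" by (auto simp: inj_def)
  have d: "(S - {w}) \<inter> range (\<lambda>a. w @ [a]) = {}" using assms(3) by auto
  have "sum f ((S - {w}) \<union> {w @ [a] | a. True}) = sum f (S - {w}) + sum f (range (\<lambda>a. w @ [a]))"
    unfolding e using assms(1) d by (intro sum.union_disjoint) auto
  also have "sum f (range (\<lambda>a. w @ [a])) = (\<Sum>a\<in>UNIV. f (w @ [a]))"
    using sum.reindex[OF inj] by simp
  also have "sum f (S - {w}) = sum f S - f w" using assms by (simp add: sum_diff1)
  finally show "sum f ((S - {w}) \<union> {w @ [a] | a. True}) = sum f S - f w + (\<Sum>a\<in>UNIV. f (w @ [a]))" .
  have "card ((S - {w}) \<union> {w @ [a] | a. True}) = card (S - {w}) + card (range (\<lambda>a. w @ [a]))"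
    unfolding e using assms(1) d by (intro card_Un_disjoint) auto
  also have "card (range (\<lambda>a. w @ [a])) = card (UNIV :: 'a set)" using card_image[OF inj] by simp
  also have "card (S - {w}) = card S - 1" using assms by simp
  finally show "card ((S - {w}) \<union> {w @ [a] | a. True}) = card S - 1 + card (UNIV :: 'a set)" .
qed

definition leaf_ent :: "('a \<Rightarrow> real) \<Rightarrow> 'a list set \<Rightarrow> real" where
  "leaf_ent P S = - (\<Sum>w\<in>S. seg_prob P w * log 2 (seg_prob P w))"

lemma inv2:
  fixes P :: "'a::finite \<Rightarrow> real"
  assumes T: "tunstall_tree P S"
    and pos: "\<And>a. 0 < P a" and le1: "\<And>a. P a \<le> 1"
    and s1: "(\<Sum>a\<in>UNIV. P a) = 1"
    and pm: "pm = Min (range P)"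
  shows "sum (seg_prob P) S = 1 \<and> (\<forall>u\<in>S. \<forall>v\<in>S. pm * seg_prob P u \<le> seg_prob P v)
    \<and> leaf_ent P S = expected_length P S * entropy2 P \<and> card S \<ge> card (UNIV :: 'a set)"
  using T
proof induction
  case init
  have e: "{[a] | a. True} = range (\<lambda>a::'a. [a])" by auto
  have inj: "inj (\<lambda>a::'a. [a])" by (auto simp: inj_def)
  have sp: "seg_prob P [a] = P a" for a by (simp add: seg_prob_def)
  have sr: "sum f {[a] | a. True} = (\<Sum>a\<in>UNIV. f [a])" for f :: "'a list \<Rightarrow> real"
    unfolding e using sum.reindex[OF inj] by simp
  have pmle: "pm \<le> P a" for a unfolding pm by (intro Min_le) auto
  have pmpos: "0 < pm" unfolding pm using pos by (subst Min_gr_iff) auto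
  have "pm * P a \<le> P b" for a b
  proof -
    have "pm * P a \<le> pm * 1" using le1[of a] pmpos by (intro mult_left_mono) auto
    then show ?thesis using pmle[of b] by simp
  qed
  moreover have "card {[a] | a::'a. True} = card (UNIV :: 'a set)"
    unfolding e using card_image[OF inj] by simp
  moreover have "sum (seg_prob P) {[a] | a. True} = 1" using sr[of "seg_prob P"] sp s1 by simp
  moreover have "expected_length P {[a] | a. True} = 1"
    unfolding expected_length_def using sr[of "\<lambda>w. seg_prob P w * real (length w)"] sp s1 by simp
  moreover have "leaf_ent P {[a] | a. True} = entropy2 P"
    unfolding leaf_ent_def entropy2_def using sr[of "\<lambda>w. seg_prob P w * log 2 (seg_prob P w)"] sp by simp
  ultimately show ?case by (auto simp: sp)
next
  case (expand S w)
  from inv1[OF expand(1)] have fin: "finite S" and pf: "\<forall>u\<in>S. \<forall>z. u @ z \<in> S \<longrightarrow> z = []" by auto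
  have nin: "\<forall>a. w @ [a] \<notin> S" using pf expand(2) by fastforce
  note SE = sum_expand[OF fin expand(2) nin]
  have IH: "sum (seg_prob P) S = 1" "\<forall>u\<in>S. \<forall>v\<in>S. pm * seg_prob P u \<le> seg_prob P v"
     "leaf_ent P S = expected_length P S * entropy2 P" "card S \<ge> card (UNIV :: 'a set)"
    using expand(4) by auto
  let ?S' = "(S - {w}) \<union> {w @ [a] | a. True}"
  let ?q = "seg_prob P w"
  have qpos: "0 < ?q" by (rule seg_prob_pos[OF pos])
  have pmle: "pm \<le> P a" for a unfolding pm by (intro Min_le) auto
  have pmpos: "0 < pm" unfolding pm using pos by (subst Min_gr_iff) auto
  have "sum (seg_prob P) ?S' = 1 - ?q + ?q * (\<Sum>a\<in>UNIV. P a)"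
    using SE(1)[of "seg_prob P"] IH(1) by (simp add: seg_prob_snoc sum_distrib_left)
  then have A: "sum (seg_prob P) ?S' = 1" using s1 by simp
  have B: "\<forall>u\<in>?S'. \<forall>v\<in>?S'. pm * seg_prob P u \<le> seg_prob P v"
  proof (intro ballI)
    fix u v assume u: "u \<in> ?S'" and v: "v \<in> ?S'"
    have mx: "seg_prob P x \<le> ?q" if "x \<in> S" for x using expand(3) that by auto
    have c1: "pm * seg_prob P x \<le> ?q * P a" if "x \<in> S" for x a
    proof -
      have "pm * seg_prob P x \<le> pm * ?q" using mx[OF that] pmpos by simp
      also have "\<dots> \<le> P a * ?q" using pmle[of a] qpos by (intro mult_right_mono) auto
      finally show ?thesis by (simp add: mult.commute)
    qed
    have c2: "pm * (?q * P a) \<le> seg_prob P x" if "x \<in> S" for x a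
    proof -
      have "pm * (?q * P a) \<le> pm * ?q" using le1[of a] qpos pmpos by simp
      also have "\<dots> \<le> seg_prob P x" using IH(2) that expand(2) by auto
      finally show ?thesis .
    qed
    have c3: "pm * (?q * P a) \<le> ?q * P b" for a b
    proof -
      have "pm * (?q * P a) \<le> pm * ?q" using le1[of a] qpos pmpos by simp
      also have "\<dots> \<le> ?q * P b" using pmle[of b] qpos by (simp add: mult.commute)
      finally show ?thesis .
    qed
    show "pm * seg_prob P u \<le> seg_prob P v"
      using u v IH(2) c1 c2 c3 by (auto simp: seg_prob_snoc)
  qed
  have E: "expected_length P ?S' = expected_length P S + ?q"
  proof -
    have "expected_length P ?S' = expected_length P S - ?q * length w
        + (\<Sum>a\<in>UNIV. ?q * P a * (length w + 1))"
      unfolding expected_length_def using SE(1) by (simp add: seg_prob_snoc)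
    also have "(\<Sum>a\<in>UNIV. ?q * P a * (length w + 1)) = ?q * (length w + 1) * (\<Sum>a\<in>UNIV. P a)"
      by (simp add: sum_distrib_left sum_distrib_right mult_ac)
    finally show ?thesis using s1 by (simp add: algebra_simps)
  qed
  have L: "leaf_ent P ?S' = leaf_ent P S + ?q * entropy2 P"
  proof -
    have "leaf_ent P ?S' = leaf_ent P S + ?q * log 2 ?q
        - (\<Sum>a\<in>UNIV. ?q * P a * log 2 (?q * P a))"
      unfolding leaf_ent_def using SE(1) by (simp add: seg_prob_snoc)
    also have "(\<Sum>a\<in>UNIV. ?q * P a * log 2 (?q * P a))
        = (\<Sum>a\<in>UNIV. ?q * log 2 ?q * P a + ?q * (P a * log 2 (P a)))"
      using qpos pos by (intro sum.cong) (auto simp: log_mult algebra_simps)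
    also have "\<dots> = ?q * log 2 ?q * (\<Sum>a\<in>UNIV. P a) + ?q * (\<Sum>a\<in>UNIV. P a * log 2 (P a))"
      by (simp add: sum.distrib sum_distrib_left)
    finally show ?thesis using s1 by (simp add: entropy2_def)
  qed
  have C: "card ?S' \<ge> card (UNIV :: 'a set)"
    using SE(2) fin expand(2) by (simp add: card_gt_0_iff)
  show ?case using A B C E L IH(3) by (simp add: algebra_simps)
qed


lemma tlnt:
  fixes t \<rho> :: real
  assumes "1 \<le> t" "t \<le> \<rho>" "1 < \<rho>"
  shows "t * ln t \<le> \<rho> * ln \<rho> / (\<rho> - 1) * (t - 1)"
proof -
  have cv: "convex_on {1..\<rho>} (\<lambda>x. x * ln x)"
  proof (rule f''_ge0_imp_convex[where f' = "\<lambda>x. ln x + 1" and f'' = "\<lambda>x. 1 / x"])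
    show "convex {1..\<rho>}" by simp
    fix x :: real assume x: "x \<in> {1..\<rho>}"
    then have xp: "0 < x" by auto
    show "((\<lambda>x. x * ln x) has_real_derivative ln x + 1) (at x)"
      using xp by (auto intro!: derivative_eq_intros)
    show "((\<lambda>x. ln x + 1) has_real_derivative 1 / x) (at x)"
      using xp by (auto intro!: derivative_eq_intros)
    show "0 \<le> 1 / x" using xp by simp
  qed
  have "t * ln t \<le> (\<rho> * ln \<rho> - 1 * ln 1) / (\<rho> - 1) * (t - 1) + 1 * ln 1"
    using convex_onD_Icc'[OF cv, of t] assms by simp
  then show ?thesis by simp
qed

lemma ent_bound:
  fixes q :: "'b \<Rightarrow> real"
  assumes fin: "finite S" and qpos: "\<And>w. w \<in> S \<Longrightarrow> 0 < q w" and s1: "sum q S = 1"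
    and rat: "\<forall>u\<in>S. \<forall>v\<in>S. pm * q u \<le> q v" and pm0: "0 < pm" and pm1: "pm < 1"
    and rho: "\<rho> = 1 / pm"
  shows "log 2 (real (card S)) - c_rho \<rho> \<le> - (\<Sum>w\<in>S. q w * log 2 (q w))"
proof -
  have ne: "S \<noteq> {}" using s1 by auto
  define a where "a = Min (q ` S)"
  have aS: "a \<in> q ` S" unfolding a_def using fin ne by (intro Min_in) auto
  then obtain w0 where w0: "w0 \<in> S" "q w0 = a" by auto
  have apos: "0 < a" using qpos w0 by auto
  have ale: "a \<le> q v" if "v \<in> S" for v unfolding a_def using fin that by auto
  have r1: "1 < \<rho>" using rho pm0 pm1 by simp
  have qle: "q v \<le> \<rho> * a" if "v \<in> S" for v
  proof -
    have "pm * q v \<le> a" using rat that w0 by auto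
    then have "\<rho> * (pm * q v) \<le> \<rho> * a" using r1 by (intro mult_left_mono) auto
    moreover have "\<rho> * (pm * q v) = q v" using rho pm0 by simp
    ultimately show ?thesis by simp
  qed
  define K where "K = \<rho> * ln \<rho> / (\<rho> - 1)"
  have Kpos: "0 < K" unfolding K_def using r1 by simp
  have pt: "q v * ln (q v) \<le> q v * ln a + K * (q v - a)" if v: "v \<in> S" for v
  proof -
    define t where "t = q v / a"
    have t1: "1 \<le> t" "t \<le> \<rho>" unfolding t_def using ale[OF v] qle[OF v] apos
      by (auto simp: field_simps)
    have qv: "q v = a * t" unfolding t_def using apos by simp
    have "q v * ln (q v) = a * t * ln a + a * (t * ln t)"
      using apos t1 by (simp add: qv ln_mult algebra_simps)
    also have "\<dots> \<le> a * t * ln a + a * (K * (t - 1))"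
      using tlnt[OF t1 r1] apos unfolding K_def by (intro add_left_mono mult_left_mono) auto
    also have "\<dots> = q v * ln a + K * (q v - a)" by (simp add: qv algebra_simps)
    finally show ?thesis .
  qed
  have "(\<Sum>v\<in>S. q v * ln (q v)) \<le> (\<Sum>v\<in>S. q v * ln a + K * (q v - a))"
    using pt by (intro sum_mono) auto
  also have "\<dots> = ln a + K * (1 - card S * a)"
  proof -
    have "(\<Sum>v\<in>S. q v * ln a + K * (q v - a)) = ln a * sum q S + K * sum q S - K * (card S * a)"
      by (simp add: sum.distrib sum_subtractf sum_distrib_left algebra_simps)
    then show ?thesis using s1 by (simp add: algebra_simps)
  qed
  finally have S1: "(\<Sum>v\<in>S. q v * ln (q v)) \<le> ln a + K * (1 - card S * a)" .
  have cpos: "0 < real (card S)" using fin ne by (simp add: card_gt_0_iff)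
  have "ln (card S * a * K) \<le> card S * a * K - 1"
    using cpos apos Kpos by (intro ln_le_minus_one) auto
  then have S2: "ln (card S) + ln a + ln K \<le> card S * a * K - 1"
    using cpos apos Kpos by (simp add: ln_mult)
  have S3: "(\<Sum>w\<in>S. q w * log 2 (q w)) = (\<Sum>v\<in>S. q v * ln (q v)) / ln 2"
    by (simp add: log_def sum_divide_distrib)
  have c: "c_rho \<rho> = (K - 1 - ln K) / ln 2" unfolding c_rho_def K_def by simp
  have "log 2 (real (card S)) - c_rho \<rho> = (ln (card S) - (K - 1 - ln K)) / ln 2"
    unfolding c by (simp add: log_def diff_divide_distrib)
  also have "\<dots> \<le> - (\<Sum>v\<in>S. q v * ln (q v)) / ln 2"
    using S1 S2 by (intro divide_right_mono) (auto simp: algebra_simps)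
  also have "\<dots> = - (\<Sum>w\<in>S. q w * log 2 (q w))" using S3 by simp
  finally show ?thesis .
qed


theorem theorem4:
  fixes P :: "'a::finite \<Rightarrow> real" and T :: "'a list set" and n :: nat and \<rho> :: real
  assumes "card (UNIV :: 'a set) \<ge> 2"
    and "\<And>a. 0 < P a" and "\<And>a. P a < 1"
    and "(\<Sum>a\<in>UNIV. P a) = 1"
    and "\<rho> = 1 / Min (range P)"
    and "tunstall_tree P T"
    and "n = card T"
    and "log 2 (real n) - c_rho \<rho> > 0"
  shows "tunstall_rate P T \<le>
           real_of_int \<lceil>log 2 (real n)\<rceil> * entropy2 P / (log 2 (real n) - c_rho \<rho>)"
proof -
  define pm where "pm = Min (range P)"
  have pmin: "pm \<in> range P" unfolding pm_def by (intro Min_in) auto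
  have pm0: "0 < pm" and pm1: "pm < 1" using pmin assms(2,3) by auto
  have le1: "\<And>a. P a \<le> 1" using assms(3) less_imp_le by blast
  note I1 = inv1[OF assms(6)]
  note I2 = inv2[OF assms(6) assms(2) le1 assms(4) pm_def]
  have fin: "finite T" using I1 by auto
  have LB: "log 2 (real (card T)) - c_rho \<rho> \<le> leaf_ent P T"
    unfolding leaf_ent_def
  proof (rule ent_bound[where S=T and q="seg_prob P" and pm=pm and \<rho>=\<rho>])
    show "\<rho> = 1 / pm" using assms(5) pm_def by simp
  qed (use fin seg_prob_pos[OF assms(2)] I2 pm0 pm1 in auto)
  define E where "E = expected_length P T"
  define D where "D = log 2 (real n) - c_rho \<rho>"
  have Dpos: "0 < D" using assms(8) D_def by simp
  have LE: "D \<le> E * entropy2 P" using LB I2 assms(7) unfolding D_def E_def by simp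
  have "1 = sum (seg_prob P) T" using I2 by simp
  also have "\<dots> \<le> E" unfolding E_def expected_length_def
  proof (intro sum_mono)
    fix w assume "w \<in> T"
    then have "1 \<le> real (length w)" using I1 by (cases w) auto
    then show "seg_prob P w \<le> seg_prob P w * real (length w)"
      using seg_prob_pos[OF assms(2), where w=w] by simp
  qed
  finally have E1: "1 \<le> E" .
  have n2: "2 \<le> real n" using I2 assms(1,7) by simp
  have "1 \<le> log 2 (real n)" using n2 by simp
  then have C: "1 \<le> real_of_int \<lceil>log 2 (real n)\<rceil>" by linarith
  define Cc where "Cc = real_of_int \<lceil>log 2 (real n)\<rceil>"
  have Cpos: "0 < Cc" using C Cc_def by simp
  have "tunstall_rate P T = Cc / E" unfolding tunstall_rate_def Cc_def E_def assms(7) by simp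
  also have "\<dots> \<le> Cc * entropy2 P / D"
  proof -
    have "Cc * D \<le> Cc * (E * entropy2 P)" using LE Cpos by simp
    then show ?thesis using E1 Dpos by (simp add: divide_simps mult_ac)
  qed
  finally show ?thesis unfolding Cc_def D_def .
qed

end
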